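(* Let $f:\mathbb{R}^n\to\mathbb{R}$ be bounded below by $f_{\mathrm{low}}$ and continuously differentiable with $\nabla f$ Lipschitz continuous with constant $L_{\nabla f}$. Run the algorithm described in the context, and suppose that (i) at every iteration $k$ the model $m_k$ is fully linear in $B(x_k,\Delta_k)$ with constants $\kappa_{\mathrm{mf}},\kappa_{\mathrm{mg}}>0$ independent of $k$, and $\|H_k\|\le \kappa_H-1$ for some $\kappa_H\ge 1$ independent of $k$; (ii) at every iteration the step satisfies $\|s_k\|\le\Delta_k$ and $m_k(x_k)-m_k(x_k+s_k)\ge \kappa_s\|g_k\|\min\left(\Delta_k,\frac{\|g_k\|}{\|H_k\|+1}\right)$ for some $\kappa_s\in(0,\tfrac12)$. Let $\epsilon>0$. If $\|\nabla f(x_k)\|\ge\epsilon$ for all $k=0,\ldots,K-1$, then $$K\le \frac{\log(\Delta_0/\Delta_{\min}(\epsilon))}{\log(\gamma_{\mathrm{dec}}^{-1})}+\left(1+\frac{\log(\gamma_{\mathrm{inc}})}{\log(\gamma_{\mathrm{dec}}^{-1})}\right)\frac{(1+\kappa_{\mathrm{mg}}\mu_c^{-1})[f(x_0)-f_{\mathrm{low}}]}{\eta_U\kappa_s\epsilon\Delta_{\min}(\epsilon)},$$ where $$\Delta_{\min}(\epsilon):=\min\left(\Delta_0,\ \frac{\gamma_{\mathrm{dec}}\epsilon}{\max\left(\frac{2\kappa_{\mathrm{mf}}}{\kappa_s(1-\eta_S)},\kappa_H,\mu_c\right)+\kappa_{\mathrm{mg}}},\ \frac{\epsilon}{(1+\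kappa_{\mathrm{mg}}\mu_c^{-1})\kappa_H}\right).$$
   Context: Norms are Euclidean (operator 2-norm for matrices); $B(x,\Delta)=\{y:\|y-x\|\le\Delta\}$. A model $m:\mathbb{R}^n\to\mathbb{R}$ is fully linear in $B(x,\Delta)$ with constants $\kappa_{\mathrm{mf}},\kappa_{\mathrm{mg}}>0$ if $|m(y)-f(y)|\le\kappa_{\mathrm{mf}}\Delta^2$ and $\|\nabla m(y)-\nabla f(y)\|\le\kappa_{\mathrm{mg}}\Delta$ for all $y\in B(x,\Delta)$. Algorithm: inputs $x_0\in\mathbb{R}^n$, $\Delta_0>0$, parameters $0<\gamma_{\mathrm{dec}}<1<\gamma_{\mathrm{inc}}$, $0<\eta_U\le\eta_S<1$, $\mu_c>0$. For $k=0,1,2,\ldots$: build a quadratic model $m_k(y)=c_k+g_k^T(y-x_k)+\tfrac12(y-x_k)^TH_k(y-x_k)$ ($H_k$ symmetric); compute a step $s_k$ (approximately minimizing $m_k(x_k+s)$ over $\|s\|\le\Delta_k$); evaluate $f(x_k+s_k)$ and $\rho_k=\frac{f(x_k)-f(x_k+s_k)}{m_k(x_k)-m_k(x_k+s_k)}$. If $\rho_k\ge\eta_S$ and $\|g_k\|\ge\mu_c\Delta_k$ (very successful): $x_{k+1}=x_k+s_k$, $\Delta_{k+1}=\gamma_{\mathrm{inc}}\Delta_k$. Else if $\eta_U\le\rho_k<\eta_S$ and $\|g_k\|\ge\mu_c\Delta_k$ (successful): $x_{k+1}=x_k+s_k$, $\Delta_{k+1}=\Delta_k$. Otherwise (unsuccessful):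 $x_{k+1}=x_k$, $\Delta_{k+1}=\gamma_{\mathrm{dec}}\Delta_k$. *)

theory Defs
  imports "HOL-Analysis.Analysis"
begin

definition qmodel :: "real \<Rightarrow> real^'n \<Rightarrow> real^'n^'n \<Rightarrow> real^'n \<Rightarrow> real^'n \<Rightarrow> real" where
  "qmodel c g H x y = c + g \<bullet> (y - x) + (1/2) * ((y - x) \<bullet> (H *v (y - x)))"

definition fully_linear ::
  "(real^'n \<Rightarrow> real) \<Rightarrow> (real^'n \<Rightarrow> real^'n) \<Rightarrow> (real^'n \<Rightarrow> real) \<Rightarrow> real^'n \<Rightarrow> real \<Rightarrow> real \<Rightarrow> real \<Rightarrow> bool" where
  "fully_linear f gf m x \<Delta> kmf kmg \<longleftrightarrow>
     (\<forall>y \<in> cball x \<Delta>. \<bar>m y - f y\<bar> \<le> kmf * \<Delta>^2 \<and>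
        (\<exists>gm. (m has_derivative (\<lambda>h. gm \<bullet> h)) (at y) \<and> norm (gm - gf y) \<le> kmg * \<Delta>))"

end

theory Submission
  imports Defs
begin

lemma qmodel_deriv: "((qmodel c g H x) has_derivative (\<lambda>h. g \<bullet> h + (1/2) * (h \<bullet> (H *v (y - x)) + (y - x) \<bullet> (H *v h)))) (at y)"
  unfolding qmodel_def
  by (auto intro!: derivative_eq_intros bounded_linear.has_derivative[OF matrix_vector_mul_bounded_linear] simp: fun_eq_iff)

lemma qmodel_grad:
  assumes "((qmodel c g H x) has_derivative (\<lambda>h. gm \<bullet> h)) (at x)"
  shows "gm = g"
proof -
  have "((qmodel c g H x) has_derivative (\<lambda>h. g \<bullet> h)) (at x)"
    using qmodel_deriv[of c g H x x] by simp
  from has_derivative_unique[OF assms this] have "\<And>h. gm \<bullet> h = g \<bullet> h" by metis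
  then have "(gm - g) \<bullet> (gm - g) = 0" by (simp add: inner_diff_left)
  then show ?thesis by simp
qed


theorem theorem4p7:
  fixes f :: "real^'n \<Rightarrow> real" and gf :: "real^'n \<Rightarrow> real^'n"
    and flow Lg :: real
    and x :: "nat \<Rightarrow> real^'n" and \<Delta> :: "nat \<Rightarrow> real"
    and c :: "nat \<Rightarrow> real" and g :: "nat \<Rightarrow> real^'n" and H :: "nat \<Rightarrow> real^'n^'n"
    and s :: "nat \<Rightarrow> real^'n"
    and \<gamma>dec \<gamma>inc \<eta>U \<eta>S \<mu>c kmf kmg kH ks \<epsilon> :: real
    and K :: nat
  assumes f_low: "\<forall>y. flow \<le> f y"
    and f_grad: "\<forall>y. (f has_derivative (\<lambda>h. gf y \<bullet> h)) (at y)"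
    and gf_cont: "continuous_on UNIV gf"
    and gf_lip: "\<forall>y z. norm (gf y - gf z) \<le> Lg * norm (y - z)"
    and Delta0: "\<Delta> 0 > 0"
    and params: "0 < \<gamma>dec" "\<gamma>dec < 1" "1 < \<gamma>inc" "0 < \<eta>U" "\<eta>U \<le> \<eta>S" "\<eta>S < 1" "\<mu>c > 0"
    and H_sym: "\<forall>k. transpose (H k) = H k"
    and fl: "\<forall>k. fully_linear f gf (qmodel (c k) (g k) (H k) (x k)) (x k) (\<Delta> k) kmf kmg"
    and kpos: "kmf > 0" "kmg > 0"
    and kH: "kH \<ge> 1" "\<forall>k. onorm (\<lambda>v. H k *v v) \<le> kH - 1"
    and ks: "0 < ks" "ks < 1/2"
    and step_len: "\<forall>k. norm (s k) \<le> \<Delta> k"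
    and step_dec: "\<forall>k. qmodel (c k) (g k) (H k) (x k) (x k) - qmodel (c k) (g k) (H k) (x k) (x k + s k)
                       \<ge> ks * norm (g k) * min (\<Delta> k) (norm (g k) / (onorm (\<lambda>v. H k *v v) + 1))"
    and update: "\<forall>k. let m = qmodel (c k) (g k) (H k) (x k);
                        \<rho> = (f (x k) - f (x k + s k)) / (m (x k) - m (x k + s k)) in
                   (if \<rho> \<ge> \<eta>S \<and> norm (g k) \<ge> \<mu>c * \<Delta> k
                    then x (Suc k) = x k + s k \<and> \<Delta> (Suc k) = \<gamma>inc * \<Delta> k
                    else if \<eta>U \<le> \<rho> \<and> \<rho> < \<eta>S \<and> norm (g k) \<ge> \<mu>c * \<Delta> k
                    then x (Suc k) = x k + s k \<and> \<Delta> (Suc k) = \<Delta> k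
                    else x (Suc k) = x k \<and> \<Delta> (Suc k) = \<gamma>dec * \<Delta> k)"
    and eps: "\<epsilon> > 0"
    and grad_big: "\<forall>k<K. norm (gf (x k)) \<ge> \<epsilon>"
  shows "let \<Delta>min = min (\<Delta> 0) (min
                 (\<gamma>dec * \<epsilon> / (max (2 * kmf / (ks * (1 - \<eta>S))) (max kH \<mu>c) + kmg))
                 (\<epsilon> / ((1 + kmg / \<mu>c) * kH)))
         in real K \<le> ln (\<Delta> 0 / \<Delta>min) / ln (1 / \<gamma>dec)
              + (1 + ln \<gamma>inc / ln (1 / \<gamma>dec))
                * ((1 + kmg / \<mu>c) * (f (x 0) - flow) / (\<eta>U * ks * \<epsilon> * \<Delta>min))"
  
proof -
  define m where "m = (\<lambda>k. qmodel (c k) (g k) (H k) (x k))"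
  define dm where "dm = (\<lambda>k. m k (x k) - m k (x k + s k))"
  define df where "df = (\<lambda>k. f (x k) - f (x k + s k))"
  define \<rho> where "\<rho> = (\<lambda>k. df k / dm k)"
  define nH where "nH = (\<lambda>k. onorm (\<lambda>v. H k *v v))"
  define succ where "succ = (\<lambda>k. \<eta>U \<le> \<rho> k \<and> \<mu>c * \<Delta> k \<le> norm (g k))"
  define C where "C = max (2 * kmf / (ks * (1 - \<eta>S))) (max kH \<mu>c)"
  define Dm where "Dm = min (\<Delta> 0) (min (\<gamma>dec * \<epsilon> / (C + kmg)) (\<epsilon> / ((1 + kmg / \<mu>c) * kH)))"
  define \<delta> where "\<delta> = \<eta>U * ks * \<epsilon> * Dm / (1 + kmg / \<mu>c)"
  define lg where "lg = ln (1 / \<gamma>dec)"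
  have upd1: "succ k \<Longrightarrow> x (Suc k) = x k + s k \<and> (\<Delta> (Suc k) = \<gamma>inc * \<Delta> k \<or> \<Delta> (Suc k) = \<Delta> k)" for k
    using update[rule_format, of k] params
    unfolding succ_def \<rho>_def dm_def df_def m_def by (auto simp: Let_def split: if_splits)
  have upd2: "\<not> succ k \<Longrightarrow> x (Suc k) = x k \<and> \<Delta> (Suc k) = \<gamma>dec * \<Delta> k" for k
    using update[rule_format, of k] params
    unfolding succ_def \<rho>_def dm_def df_def m_def by (auto simp: Let_def split: if_splits)
  have upd3: "\<eta>S \<le> \<rho> k \<Longrightarrow> \<mu>c * \<Delta> k \<le> norm (g k) \<Longrightarrow> \<Delta> (Suc k) = \<gamma>inc * \<Delta> k" for k
    using update[rule_format, of k] params
    unfolding succ_def \<rho>_def dm_def df_def m_def by (auto simp: Let_def split: if_splits)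
  have Dpos: "\<Delta> k > 0" for k
  proof (induction k)
    case 0 then show ?case using Delta0 .
  next
    case (Suc k) then show ?case using upd1[of k] upd2[of k] params by (cases "succ k") auto
  qed
  have nH0: "0 \<le> nH k" for k
    unfolding nH_def by (rule onorm_pos_le[OF matrix_vector_mul_bounded_linear])
  have nHk: "nH k + 1 \<le> kH" for k using kH(2)[rule_format, of k] unfolding nH_def by linarith
  have flk: "\<bar>m k (x k) - f (x k)\<bar> \<le> kmf * (\<Delta> k)^2 \<and> \<bar>m k (x k + s k) - f (x k + s k)\<bar> \<le> kmf * (\<Delta> k)^2
      \<and> norm (g k - gf (x k)) \<le> kmg * \<Delta> k" for k
  proof -
    have F: "fully_linear f gf (m k) (x k) (\<Delta> k) kmf kmg" using fl m_def by simp
    have c1: "x k \<in> cball (x k) (\<Delta> k)" using Dpos[of k] by simp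
    have c2: "x k + s k \<in> cball (x k) (\<Delta> k)" using step_len by (simp add: dist_norm)
    from F c1 obtain gm where gm: "(m k has_derivative (\<lambda>h. gm \<bullet> h)) (at (x k))" "norm (gm - gf (x k)) \<le> kmg * \<Delta> k"
      unfolding fully_linear_def by blast
    have "gm = g k" using qmodel_grad gm(1) unfolding m_def by blast
    then show ?thesis using F c1 c2 gm(2) unfolding fully_linear_def by blast
  qed
  have dm_ge: "dm k \<ge> ks * norm (g k) * min (\<Delta> k) (norm (g k) / (nH k + 1))" for k
    using step_dec unfolding dm_def m_def nH_def by simp
  have Cge: "C \<ge> kH" "C \<ge> \<mu>c" "C \<ge> 2 * kmf / (ks * (1 - \<eta>S))" unfolding C_def by auto
  have Cpos: "C > 0" using Cge kH by linarith
  have key: "\<Delta> (Suc k) = \<gamma>inc * \<Delta> k" if gk: "norm (gf (x k)) \<ge> \<epsilon>" and Dk: "\<Delta> k \<le> \<epsilon> / (C + kmg)" for k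
  proof -
    have D: "\<Delta> k > 0" by (rule Dpos)
    have "(C + kmg) * \<Delta> k \<le> \<epsilon>" using Dk Cpos kpos by (simp add: field_simps)
    moreover have "norm (gf (x k)) \<le> norm (g k) + norm (g k - gf (x k))"
      by (metis add.commute norm_triangle_sub norm_minus_commute)
    ultimately have gC: "norm (g k) \<ge> C * \<Delta> k" using flk[of k] gk by (simp add: algebra_simps)
    have g1: "norm (g k) \<ge> \<mu>c * \<Delta> k" using gC Cge(2) D by (meson mult_right_mono less_imp_le order_trans)
    have g2: "norm (g k) \<ge> (nH k + 1) * \<Delta> k" using gC Cge(1) nHk[of k] D
      by (meson mult_right_mono less_imp_le order_trans)
    have "norm (g k) / (nH k + 1) \<ge> \<Delta> k" using g2 nH0[of k] by (simp add: field_simps)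
    then have dmk: "dm k \<ge> ks * norm (g k) * \<Delta> k" using dm_ge[of k] by simp
    have g3: "norm (g k) \<ge> 2 * kmf / (ks * (1 - \<eta>S)) * \<Delta> k" using gC Cge(3) D
      by (meson mult_right_mono less_imp_le order_trans)
    have "(1 - \<eta>S) * ks * norm (g k) \<ge> (1 - \<eta>S) * ks * (2 * kmf / (ks * (1 - \<eta>S)) * \<Delta> k)"
      using g3 params ks by (intro mult_left_mono) auto
    also have "(1 - \<eta>S) * ks * (2 * kmf / (ks * (1 - \<eta>S)) * \<Delta> k) = 2 * kmf * \<Delta> k"
      using params ks by (simp add: field_simps)
    finally have "(1 - \<eta>S) * ks * norm (g k) * \<Delta> k \<ge> 2 * kmf * \<Delta> k * \<Delta> k"
      using D by (simp add: mult_right_mono)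
    moreover have "(1 - \<eta>S) * dm k \<ge> (1 - \<eta>S) * (ks * norm (g k) * \<Delta> k)"
      using dmk params by (intro mult_left_mono) auto
    ultimately have A: "(1 - \<eta>S) * dm k \<ge> 2 * kmf * (\<Delta> k)^2" by (simp add: power2_eq_square algebra_simps)
    have B: "df k \<ge> dm k - 2 * kmf * (\<Delta> k)^2" using flk[of k] unfolding df_def dm_def by linarith
    have dmpos: "dm k > 0"
    proof -
      have "norm (g k) > 0" using g1 D params by (smt (verit) mult_pos_pos)
      then show ?thesis using dmk D ks by (smt (verit) mult_pos_pos)
    qed
    have "df k \<ge> \<eta>S * dm k" using A B by (simp add: algebra_simps)
    then have "\<rho> k \<ge> \<eta>S" unfolding \<rho>_def using dmpos by (simp add: field_simps)
    then show ?thesis using upd3 g1 by blast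
  qed
  have Dmpos: "Dm > 0" unfolding Dm_def using Delta0 params eps Cpos kpos kH by (auto intro!: divide_pos_pos mult_pos_pos add_pos_pos)
  have DmK: "\<Delta> k \<ge> Dm" if "k \<le> K" for k
    using that
  proof (induction k)
    case 0 then show ?case unfolding Dm_def by simp
  next
    case (Suc k)
    then have kK: "k < K" and IH: "\<Delta> k \<ge> Dm" by auto
    show ?case
    proof (cases "\<Delta> k \<le> \<epsilon> / (C + kmg)")
      case True
      then have "\<Delta> (Suc k) = \<gamma>inc * \<Delta> k" using key grad_big kK by blast
      moreover have "1 * \<Delta> k \<le> \<gamma>inc * \<Delta> k" using params Dpos[of k] by (intro mult_right_mono) auto
      ultimately show ?thesis using IH by simp
    next
      case False
      have "\<Delta> (Suc k) \<ge> \<gamma>dec * \<Delta> k"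
        using upd1[of k] upd2[of k] params Dpos[of k] by (cases "succ k") (auto simp: mult_right_mono)
      moreover have "\<gamma>dec * \<Delta> k \<ge> \<gamma>dec * (\<epsilon> / (C + kmg))" using False params by (intro mult_left_mono) auto
      moreover have "Dm \<le> \<gamma>dec * \<epsilon> / (C + kmg)" unfolding Dm_def by simp
      ultimately show ?thesis by simp
    qed
  qed
  have sdec: "f (x k) - f (x (Suc k)) \<ge> \<delta>" if kK: "k < K" and sk: "succ k" for k
  proof -
    have D: "\<Delta> k > 0" by (rule Dpos)
    have g1: "\<mu>c * \<Delta> k \<le> norm (g k)" and r: "\<eta>U \<le> \<rho> k" using sk unfolding succ_def by auto
    have "norm (gf (x k)) \<le> norm (g k) + norm (g k - gf (x k))"
      by (metis add.commute norm_triangle_sub norm_minus_commute)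
    also have "\<dots> \<le> norm (g k) + kmg * \<Delta> k" using flk[of k] by simp
    also have "kmg * \<Delta> k \<le> kmg * (norm (g k) / \<mu>c)" using g1 params kpos
      by (intro mult_left_mono) (auto simp: field_simps)
    finally have "\<epsilon> \<le> norm (g k) * (1 + kmg / \<mu>c)" using grad_big[rule_format, OF kK] by (simp add: algebra_simps)
    then have ge: "norm (g k) \<ge> \<epsilon> / (1 + kmg / \<mu>c)" using params kpos
      by (simp add: field_simps)
    have mpos: "1 + kmg / \<mu>c > 0" using params kpos by (simp add: add_pos_pos)
    have "Dm \<le> \<epsilon> / ((1 + kmg / \<mu>c) * kH)" unfolding Dm_def by simp
    also have "\<dots> = (\<epsilon> / (1 + kmg / \<mu>c)) / kH" by simp
    also have "\<dots> \<le> norm (g k) / kH" using ge kH by (intro divide_right_mono) auto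
    also have "\<dots> \<le> norm (g k) / (nH k + 1)" using nHk[of k] nH0[of k]
      by (intro divide_left_mono) auto
    finally have m1: "Dm \<le> min (\<Delta> k) (norm (g k) / (nH k + 1))" using DmK kK by simp
    have "ks * (\<epsilon> / (1 + kmg / \<mu>c)) * Dm \<le> ks * norm (g k) * Dm"
      using ge ks Dmpos by (intro mult_right_mono mult_left_mono) auto
    also have "\<dots> \<le> ks * norm (g k) * min (\<Delta> k) (norm (g k) / (nH k + 1))"
      using m1 ks by (intro mult_left_mono) auto
    also have "\<dots> \<le> dm k" by (rule dm_ge)
    finally have dmb: "ks * (\<epsilon> / (1 + kmg / \<mu>c)) * Dm \<le> dm k" .
    have dmpos: "dm k > 0"
    proof -
      have "ks * (\<epsilon> / (1 + kmg / \<mu>c)) * Dm > 0" using ks eps mpos Dmpos by simp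
      then show ?thesis using dmb by linarith
    qed
    have "df k \<ge> \<eta>U * dm k" using r dmpos unfolding \<rho>_def by (simp add: field_simps)
    moreover have "\<eta>U * dm k \<ge> \<eta>U * (ks * (\<epsilon> / (1 + kmg / \<mu>c)) * Dm)" using dmb params by (intro mult_left_mono) auto
    moreover have "\<delta> = \<eta>U * (ks * (\<epsilon> / (1 + kmg / \<mu>c)) * Dm)" unfolding \<delta>_def by simp
    ultimately show ?thesis using upd1[OF sk] unfolding df_def by simp
  qed
  define S where "S = (\<lambda>j. \<Sum>k<j. if succ k then 1 else (0::real))"
  define U where "U = (\<lambda>j. \<Sum>k<j. if succ k then 0 else (1::real))"
  have SU: "S j + U j = real j" for j
    unfolding S_def U_def by (induction j) auto
  have lgpos: "lg > 0" unfolding lg_def using params by simp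
  have lnginc: "ln \<gamma>inc > 0" using params by simp
  have inv: "j \<le> K \<Longrightarrow> f (x 0) - f (x j) \<ge> S j * \<delta> \<and> ln (\<Delta> j) \<le> ln (\<Delta> 0) + S j * ln \<gamma>inc - U j * lg" for j
  proof (induction j)
    case 0 then show ?case unfolding S_def U_def by simp
  next
    case (Suc j)
    then have jK: "j < K" and IH: "f (x 0) - f (x j) \<ge> S j * \<delta>" "ln (\<Delta> j) \<le> ln (\<Delta> 0) + S j * ln \<gamma>inc - U j * lg" by auto
    show ?case
    proof (cases "succ j")
      case True
      have "ln (\<Delta> (Suc j)) \<le> ln (\<Delta> j) + ln \<gamma>inc"
        using upd1[OF True] Dpos[of j] params lnginc by (auto simp: ln_mult)
      then show ?thesis using IH sdec[OF jK True] True unfolding S_def U_def by (simp add: algebra_simps)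
    next
      case False
      have "ln (\<Delta> (Suc j)) = ln (\<Delta> j) - lg"
        using upd2[OF False] Dpos[of j] params unfolding lg_def by (simp add: ln_mult ln_div)
      then show ?thesis using IH upd2[OF False] False unfolding S_def U_def by (simp add: algebra_simps)
    qed
  qed
  from inv[of K] have I1: "f (x 0) - f (x K) \<ge> S K * \<delta>" and I2: "ln (\<Delta> K) \<le> ln (\<Delta> 0) + S K * ln \<gamma>inc - U K * lg" by auto
  have \<delta>pos: "\<delta> > 0" unfolding \<delta>_def using params ks eps Dmpos kpos by (simp add: add_pos_pos)
  have "S K * \<delta> \<le> f (x 0) - flow" using I1 f_low[rule_format, of "x K"] by linarith
  then have "S K \<le> (f (x 0) - flow) / \<delta>" using \<delta>pos by (simp add: pos_le_divide_eq)
  also have "(f (x 0) - flow) / \<delta> = (1 + kmg / \<mu>c) * (f (x 0) - flow) / (\<eta>U * ks * \<epsilon> * Dm)"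
    unfolding \<delta>_def by simp
  finally have Sb: "S K \<le> (1 + kmg / \<mu>c) * (f (x 0) - flow) / (\<eta>U * ks * \<epsilon> * Dm)" .
  have "ln Dm \<le> ln (\<Delta> K)" using DmK[of K] Dmpos by simp
  then have "U K * lg \<le> ln (\<Delta> 0 / Dm) + S K * ln \<gamma>inc" using I2 Dmpos Delta0 by (simp add: ln_div)
  then have Ub: "U K \<le> ln (\<Delta> 0 / Dm) / lg + S K * (ln \<gamma>inc / lg)" using lgpos by (simp add: field_simps)
  have co: "1 + ln \<gamma>inc / lg \<ge> 0" using lnginc lgpos by simp
  have "real K = S K + U K" using SU by simp
  also have "\<dots> \<le> ln (\<Delta> 0 / Dm) / lg + (1 + ln \<gamma>inc / lg) * S K" using Ub by (simp add: algebra_simps)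
  also have "\<dots> \<le> ln (\<Delta> 0 / Dm) / lg + (1 + ln \<gamma>inc / lg) * ((1 + kmg / \<mu>c) * (f (x 0) - flow) / (\<eta>U * ks * \<epsilon> * Dm))"
    using mult_left_mono[OF Sb co] by linarith
  finally show ?thesis unfolding Let_def Dm_def[symmetric] C_def[symmetric] lg_def by simp
qed

end
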